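(* Let $R$ be a CSNC ring and let $S\subseteq R$ be a subset closed under addition, negation and multiplication which is itself a ring with an identity element $1_S$ (not necessarily equal to $1_R$). Then $S$ is a CSNC ring. In particular, for every $e\in\mathrm{Id}(R)$ the corner ring $eRe$ is a CSNC ring.
   Context: All rings are associative with identity. For a ring $R$, $\mathrm{Id}(R)$, $U(R)$, $\mathrm{Nil}(R)$ denote the sets of idempotents, units and nilpotent elements. An element $a\in R$ is clean if $a=e+u$ for some $e\in\mathrm{Id}(R)$, $u\in U(R)$. An element $a$ is strongly nil-clean if $a=e+q$ with $e\in \mathrm{Id}(R)$, $q\in\mathrm{Nil}(R)$ and $eq=qe$. A ring $R$ is called CSNC if every clean element of $R$ is strongly nil-clean. *)

theory Defs
  imports Main
begin

text \<open>Ring-theoretic notions relative to a subset S of a ring 'a (type class ring_1),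
  where S is regarded as a ring with its own identity element one (possibly different from 1).\<close>

definition idem_in :: "'a::ring_1 set \<Rightarrow> 'a set" where
  "idem_in S = {e \<in> S. e * e = e}"

definition units_in :: "'a::ring_1 set \<Rightarrow> 'a \<Rightarrow> 'a set" where
  "units_in S one = {u \<in> S. \<exists>v \<in> S. u * v = one \<and> v * u = one}"

definition nil_in :: "'a::ring_1 set \<Rightarrow> 'a set" where
  "nil_in S = {q \<in> S. \<exists>n::nat. n > 0 \<and> q ^ n = 0}"

definition clean_in :: "'a::ring_1 set \<Rightarrow> 'a \<Rightarrow> 'a \<Rightarrow> bool" where
  "clean_in S one a \<longleftrightarrow> (\<exists>e \<in> idem_in S. \<exists>u \<in> units_in S one. a = e + u)"

definition strongly_nil_clean_in :: "'a::ring_1 set \<Rightarrow> 'a \<Rightarrow> bool" where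
  "strongly_nil_clean_in S a \<longleftrightarrow>
     (\<exists>e \<in> idem_in S. \<exists>q \<in> nil_in S. a = e + q \<and> e * q = q * e)"

definition CSNC_on :: "'a::ring_1 set \<Rightarrow> 'a \<Rightarrow> bool" where
  "CSNC_on S one \<longleftrightarrow> (\<forall>a \<in> S. clean_in S one a \<longrightarrow> strongly_nil_clean_in S a)"

definition CSNC_ring :: "'a::ring_1 itself \<Rightarrow> bool" where
  "CSNC_ring _ \<longleftrightarrow> CSNC_on (UNIV :: 'a set) 1"

definition subring_with_identity :: "'a::ring_1 set \<Rightarrow> 'a \<Rightarrow> bool" where
  "subring_with_identity S one \<longleftrightarrow>
     (\<forall>x \<in> S. \<forall>y \<in> S. x + y \<in> S \<and> x * y \<in> S) \<and> (\<forall>x \<in> S. - x \<in> S) \<and>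
     one \<in> S \<and> (\<forall>x \<in> S. one * x = x \<and> x * one = x)"

end

theory Submission
  imports Defs begin

lemma binom1: "(1 + q :: 'a::ring_1) ^ n = (\<Sum>k\<le>n. of_nat (n choose k) * q ^ k)"
proof (induct n)
  case 0 then show ?case by simp
next
  case (Suc n)
  have "(1 + q) ^ Suc n = (\<Sum>k\<le>n. of_nat (n choose k) * q ^ k) * (1 + q)"
    by (subst power_Suc2) (simp only: Suc)
  also have "\<dots> = (\<Sum>k\<le>n. of_nat (n choose k) * q ^ k) + (\<Sum>k\<le>n. of_nat (n choose k) * q ^ Suc k)"
    by (simp only: distrib_left sum_distrib_right mult.assoc power_Suc2 mult_1_right)
  also have "(\<Sum>k\<le>n. of_nat (n choose k) * q ^ Suc k) = (\<Sum>k=1..Suc n. of_nat (n choose (k - 1)) * q ^ k)"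
    by (simp add: atMost_atLeast0 sum.shift_bounds_cl_Suc_ivl del: sum.cl_ivl_Suc)
  also have "(\<Sum>k\<le>n. of_nat (n choose k) * q ^ k) = 1 + (\<Sum>k=1..Suc n. of_nat (n choose k) * q ^ k)"
    by (simp add: atMost_atLeast0 sum.atLeast_Suc_atMost binomial_eq_0)
  finally have "(1 + q) ^ Suc n = 1 + ((\<Sum>k=1..Suc n. of_nat (n choose k) * q ^ k) + (\<Sum>k=1..Suc n. of_nat (n choose (k - 1)) * q ^ k))"
    by (simp add: add.assoc)
  also have "\<dots> = 1 + (\<Sum>k=1..Suc n. of_nat (Suc n choose k) * q ^ k)"
  proof -
    have "(\<Sum>k=1..Suc n. of_nat (n choose k) * q ^ k) + (\<Sum>k=1..Suc n. of_nat (n choose (k - 1)) * q ^ k)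
        = (\<Sum>k=1..Suc n. of_nat (n choose k) * q ^ k + of_nat (n choose (k - 1)) * q ^ k)"
      by (simp only: sum.distrib)
    also have "\<dots> = (\<Sum>k=1..Suc n. of_nat (Suc n choose k) * q ^ k)"
    proof (rule sum.cong[OF refl])
      fix k assume "k \<in> {1..Suc n}"
      then obtain j where k: "k = Suc j" by (cases k) auto
      show "of_nat (n choose k) * q ^ k + of_nat (n choose (k - 1)) * q ^ k = of_nat (Suc n choose k) * q ^ k"
        unfolding k by (simp only: binomial_Suc_Suc distrib_right[symmetric] of_nat_add diff_Suc_1 add.commute)
    qed
    finally show ?thesis by simp
  qed
  also have "\<dots> = (\<Sum>k\<le>Suc n. of_nat (Suc n choose k) * q ^ k)"
    by (simp add: atMost_atLeast0 sum.atLeast_Suc_atMost)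
  finally show ?case .
qed

lemma dvd_lemma: "2^(a+b) dvd l*(c::nat) \<Longrightarrow> 0<l \<Longrightarrow> l < 2^b \<Longrightarrow> 2^a dvd c"
proof (induct b arbitrary: l)
  case 0 then show ?case by simp
next
  case (Suc b)
  show ?case
  proof (cases "even l")
    case True
    then obtain l' where l: "l = 2*l'" by blast
    have "2^(a+b) dvd l'*c" using Suc.prems l by (simp add: mult.assoc)
    then show ?thesis using Suc l by simp
  next
    case False
    then have "coprime (2^(a+Suc b)) l" by simp
    then have "2^(a+Suc b) dvd c" using Suc.prems coprime_dvd_mult_right_iff by blast
    then show ?thesis by (meson dvd_trans le_add1 power_le_dvd)
  qed
qed

lemma choose_dvd: "0<l \<Longrightarrow> l < 2^N \<Longrightarrow> 2^K dvd (2^(K+N) choose l)"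
  using times_binomial_minus1_eq[of l "2^(K+N)"] dvd_lemma[of K N l]
  by (metis dvd_triv_left)

lemma unipot:
  assumes "of_nat (2^K) = (0::'a::ring_1)" "q ^ N = (0::'a)"
  shows "(1 + q) ^ (2^(K+N)) = 1"
proof -
  have "(1 + q) ^ (2^(K+N)) = (\<Sum>k\<le>(2::nat)^(K+N). if k = 0 then 1 else (0::'a))"
    unfolding binom1
  proof (rule sum.cong[OF refl])
    fix k :: nat assume "k \<in> {..2^(K+N)}"
    show "of_nat (2^(K+N) choose k) * q ^ k = (if k = 0 then 1 else 0)"
    proof (cases "k = 0")
      case False
      show ?thesis
      proof (cases "k < N")
        case True
        then have "k < 2^N" using less_exp less_trans by blast
        then obtain c where "2^(K+N) choose k = 2^K * c" using choose_dvd False by blast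
        then show ?thesis using assms False by simp
      next
        case False2: False
        then have "q ^ k = 0" using assms(2) by (metis le_add_diff_inverse not_less power_add mult_zero_left)
        then show ?thesis using False by simp
      qed
    qed simp
  qed
  also have "\<dots> = 1" by simp
  finally show ?thesis .
qed

lemma decomp_pow:
  assumes gg: "g * g = g" and gq: "g * q = q * (g::'a::ring_1)"
  shows "g * (g + q) ^ n = g * (1 + q) ^ n" and "(1 - g) * (g + q) ^ n = (1 - g) * q ^ n"
proof -
  have c1: "(1 + q) ^ n * g = g * (1 + q) ^ n" for n
    by (rule power_commuting_commutes) (simp only: distrib_left distrib_right mult_1_left mult_1_right gq)
  have c2: "q ^ n * g = g * q ^ n" for n
    by (rule power_commuting_commutes) (rule gq[symmetric])
  show "g * (g + q) ^ n = g * (1 + q) ^ n"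
  proof (induct n)
    case (Suc n)
    have "g * (g + q) ^ Suc n = g * (1 + q) ^ n * (g + q)"
      using Suc by (metis power_Suc2 mult.assoc)
    also have "\<dots> = g * ((1 + q) ^ n * g) + g * (1 + q) ^ n * q"
      by (simp only: distrib_left mult.assoc)
    also have "g * ((1 + q) ^ n * g) = g * (1 + q) ^ n"
      by (simp only: c1 gg mult.assoc[symmetric])
    also have "g * (1 + q) ^ n + g * (1 + q) ^ n * q = g * (1 + q) ^ n * (1 + q)"
      by (simp only: distrib_left mult_1_right)
    also have "\<dots> = g * (1 + q) ^ Suc n"
      by (simp only: power_Suc2 mult.assoc)
    finally show ?case .
  qed simp
  show "(1 - g) * (g + q) ^ n = (1 - g) * q ^ n"
  proof (induct n)
    case (Suc n)
    have "(1 - g) * (g + q) ^ Suc n = (1 - g) * q ^ n * (g + q)"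
      using Suc by (metis power_Suc2 mult.assoc)
    also have "\<dots> = (1 - g) * (q ^ n * g) + (1 - g) * q ^ n * q"
      by (simp only: distrib_left mult.assoc)
    also have "(1 - g) * (q ^ n * g) = 0"
      by (simp only: c2 gg mult.assoc[symmetric] left_diff_distrib mult_1_left diff_self mult_zero_left)
    also have "0 + (1 - g) * q ^ n * q = (1 - g) * q ^ Suc n"
      by (simp only: power_Suc2 mult.assoc add_0_left)
    finally show ?case .
  qed simp
qed

lemma pow_1g: "g * g = (g::'a::ring_1) \<Longrightarrow> (1 + g) ^ k + g = 1 + of_nat (2^k) * g"
proof (induct k)
  case (Suc k)
  have "(1 + g) ^ Suc k + g = ((1 + g) ^ k + g) * (1 + g) - g * (1 + g) + g"
    by (simp add: power_Suc2 algebra_simps del: power_Suc)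
  also have "\<dots> = (1 + of_nat (2^k) * g) * (1 + g) - g"
    using Suc by (simp add: algebra_simps)
  also have "\<dots> = 1 + of_nat (2^Suc k) * g"
    using Suc by (simp add: algebra_simps mult.assoc mult_2)
  finally show ?case .
qed simp


lemma two_nilp:
  assumes "CSNC_on (UNIV :: 'a::ring_1 set) 1"
  shows "\<exists>K. (of_nat (2^K) :: 'a) = 0"
proof -
  have "0 \<in> idem_in (UNIV::'a set)" unfolding idem_in_def by simp
  moreover have "(-1::'a) * -1 = 1" by simp
  then have "(-1::'a) \<in> units_in UNIV 1" unfolding units_in_def by blast
  ultimately have "clean_in UNIV 1 (-1::'a)" unfolding clean_in_def by force
  then have "strongly_nil_clean_in UNIV (-1::'a)" using assms unfolding CSNC_on_def by blast
  then obtain g q :: 'a and n :: nat where gg: "g * g = g" and qn: "q ^ n = (0::'a)" and e: "-1 = g + q"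
    unfolding strongly_nil_clean_in_def idem_in_def nil_in_def by blast
  have "1 + g = - q" using e by (metis add.commute add_minus_cancel minus_add_distrib minus_minus)
  then have "(1 + g) ^ n = (- q) ^ n" by simp
  also have "\<dots> = (-1) ^ n * q ^ n" by (rule power_minus)
  also have "\<dots> = 0" using qn by simp
  finally have z: "(1 + g) ^ n = 0" .
  define c :: 'a where "c = of_nat (2^n)"
  have cc: "c * x = x * c" for x unfolding c_def by (rule mult_of_nat_commute)
  have "(1 + g) ^ n + g = 1 + c * g" unfolding c_def by (rule pow_1g[OF gg])
  then have g1: "g = 1 + c * g" using z by simp
  have h0: "(1 - g) * g = 0" using gg by (simp add: left_diff_distrib)
  have "(1 - g) * g = (1 - g) * (1 + c * g)" using g1 by simp
  also have "\<dots> = (1 - g) + ((1 - g) * c) * g" by (simp add: distrib_left mult.assoc)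
  also have "\<dots> = (1 - g) + c * ((1 - g) * g)" by (simp add: cc mult.assoc)
  finally have "1 - g = 0" using h0 by simp
  then have "g = 1" by simp
  then have "c = 0" using g1 by simp
  then show ?thesis unfolding c_def by blast
qed

lemma pow_in:
  fixes a :: "'a::ring_1"
  assumes "\<forall>x \<in> S. \<forall>y \<in> S. x + y \<in> S \<and> x * y \<in> S" "a \<in> S" "m > 0"
  shows "a ^ m \<in> S"
proof -
  have "a ^ Suc k \<in> S" for k
  proof (induct k)
    case 0 show ?case using assms(2) by simp
  next
    case (Suc k)
    have "a ^ Suc (Suc k) = a * a ^ Suc k" by (rule power_Suc)
    then show ?case using assms(1,2) Suc by metis
  qed
  moreover obtain k where "m = Suc k" using assms(3) gr0_implies_Suc by blast
  ultimately show ?thesis by simp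
qed

lemma part1:
  fixes S :: "'a::ring_1 set" and f :: 'a
  assumes R: "CSNC_ring TYPE('a)" and sub: "subring_with_identity S f"
  shows "CSNC_on S f"
  unfolding CSNC_on_def
proof (intro ballI impI)
  fix a assume aS: "a \<in> S" and cl: "clean_in S f a"
  have RC: "CSNC_on (UNIV :: 'a set) 1" using R unfolding CSNC_ring_def .
  have clos: "\<forall>x \<in> S. \<forall>y \<in> S. x + y \<in> S \<and> x * y \<in> S" and neg: "\<forall>x \<in> S. - x \<in> S"
    and fS: "f \<in> S" and fid: "\<forall>x \<in> S. f * x = x \<and> x * f = x"
    using sub unfolding subring_with_identity_def by auto
  obtain e u v where eS: "e \<in> S" and ee: "e * e = e" and uS: "u \<in> S" and vS: "v \<in> S"
    and uv: "u * v = f" and vu: "v * u = f" and ae: "a = e + u"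
    using cl unfolding clean_in_def idem_in_def units_in_def by blast
  have ef: "e * f = e" "f * e = e" and uf: "u * f = u" "f * u = u" and vf: "v * f = v" "f * v = v"
    and ff: "f * f = f" using fid eS uS vS fS by auto
  have i1: "e + 1 - f \<in> idem_in UNIV"
    unfolding idem_in_def using ef ee ff by (simp add: algebra_simps)
  have w1: "(u - (1 - f)) * (v - (1 - f)) = 1" "(v - (1 - f)) * (u - (1 - f)) = 1"
    using ef uf vf ff uv vu by (simp_all add: algebra_simps)
  have u1': "u - (1 - f) \<in> units_in UNIV 1"
    unfolding units_in_def using w1 by blast
  have "a = (e + 1 - f) + (u - (1 - f))" using ae by simp
  then have "clean_in UNIV 1 a" unfolding clean_in_def using i1 u1' by blast
  then have "strongly_nil_clean_in UNIV a" using RC unfolding CSNC_on_def by blast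
  then obtain g q n where gg: "g * g = g" and qn: "q ^ n = (0::'a)" and n0: "n > 0"
    and agq: "a = g + q" and gq: "g * q = q * g"
    unfolding strongly_nil_clean_in_def idem_in_def nil_in_def by blast
  obtain K where K: "(of_nat (2^K) :: 'a) = 0" using two_nilp[OF RC] by blast
  define m :: nat where "m = 2^(K+n)"
  have u1: "(1 + q) ^ m = 1" unfolding m_def by (rule unipot[OF K qn])
  have "n < 2^n" by (rule less_exp)
  moreover have "(2::nat)^n \<le> 2^(K+n)" by (rule power_increasing) simp_all
  ultimately have "n \<le> m" unfolding m_def by linarith
  then have qm: "q ^ m = 0" using qn by (metis le_add_diff_inverse power_add mult_zero_left)
  have "a ^ m = g * a ^ m + (1 - g) * a ^ m" by (simp add: algebra_simps)
  also have "\<dots> = g" unfolding agq decomp_pow[OF gg gq] u1 qm by simp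
  finally have am: "a ^ m = g" .
  have gS: "g \<in> S" using pow_in[OF clos aS, of m] am unfolding m_def by simp
  have "q = a + - g" using agq by simp
  moreover have "- g \<in> S" using neg gS by blast
  ultimately have qS: "q \<in> S" using clos aS by metis
  have gI: "g \<in> idem_in S" unfolding idem_in_def using gS gg by simp
  have qN: "q \<in> nil_in S" unfolding nil_in_def using qS qn n0 by blast
  show "strongly_nil_clean_in S a"
    unfolding strongly_nil_clean_in_def using gI qN agq gq by blast
qed

theorem mainTheorem16:
  fixes S :: "'a::ring_1 set" and one :: 'a
  assumes "CSNC_ring TYPE('a)"
    and "subring_with_identity S one"
  shows "CSNC_on S one \<and>
         (\<forall>e :: 'a. e * e = e \<longrightarrow> CSNC_on {e * r * e | r. True} e)"
proof (intro conjI allI impI)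
  show "CSNC_on S one" by (rule part1[OF assms])
  fix e :: 'a assume ee: "e * e = e"
  have "subring_with_identity {e * r * e | r. True} e"
    unfolding subring_with_identity_def
  proof (intro conjI ballI)
    fix x y assume "x \<in> {e * r * e | r. True}" "y \<in> {e * r * e | r. True}"
    then obtain r s where x: "x = e * r * e" and y: "y = e * s * e" by blast
    show "x + y \<in> {e * r * e | r. True}" unfolding x y
      by (rule CollectI, rule exI[of _ "r + s"]) (simp add: algebra_simps)
    show "x * y \<in> {e * r * e | r. True}" unfolding x y
      by (rule CollectI, rule exI[of _ "r * e * e * s"]) (simp add: mult.assoc)
  next
    fix x assume "x \<in> {e * r * e | r. True}"
    then obtain r where x: "x = e * r * e" by blast
    show "- x \<in> {e * r * e | r. True}" unfolding x
      by (rule CollectI, rule exI[of _ "- r"]) simp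
    show "e * x = x" unfolding x using ee by (simp add: mult.assoc[symmetric])
    show "x * e = x" unfolding x using ee by (simp add: mult.assoc)
  next
    show "e \<in> {e * r * e | r. True}" using ee by (auto intro!: exI[of _ 1])
  qed
  then show "CSNC_on {e * r * e | r. True} e" by (rule part1[OF assms(1)])
qed

end
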